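(* Let $0<\alpha<1$ and let $f\in L^1_{1-\alpha}([0,1[)$ be locally contracting on $[0,1[$ with $f(0)=0$. Then $(D_\alpha f)(0)$ exists and equals $0$.
   Context: Fourier coefficients: $\widehat h(s)=\frac1{2\pi}\int_{-\pi}^{\pi}h(\theta)e^{-is\theta}d\theta$; $T_N(h)$ is the $(N+1)\times(N+1)$ matrix with $(T_N(h))_{k+1,l+1}=\widehat h(k-l)$, $0\le k,l\le N$. $\varphi_{\alpha,R}(\theta)=(1-Re^{i\theta})^{\alpha}(1+Re^{-i\theta})^{\alpha}$ (principal branch), $\varphi_\alpha=\lim_{R\to1^-}\varphi_{\alpha,R}$. For $f$ on $[0,1[$ (with $f(1)$ set to $0$ since it is not defined), $X_N\in\mathbb R^{N+1}$ with $(X_N)_l=f(l/N)$. $f$ is $\alpha$-derivable at $x\in[0,1]$ if $\lim_{N\to+\infty}N^{\alpha}\sum_{l=0}^{N}(T_N(\varphi_\alpha))_{k+1,l+1}(X_N)_l$, $k=[Nx]$, exists and is finite; its value is $(D_\alpha f)(x)$. Locally contracting on $[0,1[$: Lipschitz on every compact interval contained in $[0,1[$. $f\in L^1_{1-\alpha}([0,1[)$ means there is $\gamma\in[0,1-\alpha]$ with $f(x)=O(x^{-\gamma})$ and $f(1-x)=O(x^{-\gamma})$ as $x\to0^+$. *)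

theory Defs
  imports "HOL-Analysis.Analysis" "HOL-Library.Landau_Symbols"
begin

definition fourier_coeff :: "(real \<Rightarrow> complex) \<Rightarrow> int \<Rightarrow> complex" where
  "fourier_coeff h s =
     complex_of_real (1 / (2 * pi)) *
     integral {-pi..pi} (\<lambda>\<theta>. h \<theta> * exp (- \<i> * of_int s * of_real \<theta>))"

text \<open>Entry (k+1,l+1) of the Toeplitz matrix T_N(h), for 0 <= k,l <= N.\<close>
definition toeplitz_entry :: "(real \<Rightarrow> complex) \<Rightarrow> nat \<Rightarrow> nat \<Rightarrow> complex" where
  "toeplitz_entry h k l = fourier_coeff h (int k - int l)"

definition phi_R :: "real \<Rightarrow> real \<Rightarrow> real \<Rightarrow> complex" where
  "phi_R \<alpha> R \<theta> =
     (1 - of_real R * exp (\<i> * of_real \<theta>)) powr (of_real \<alpha>) *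
     (1 + of_real R * exp (- \<i> * of_real \<theta>)) powr (of_real \<alpha>)"

definition phi :: "real \<Rightarrow> real \<Rightarrow> complex" where
  "phi \<alpha> \<theta> = Lim (at_left 1) (\<lambda>R. phi_R \<alpha> R \<theta>)"

definition XN :: "(real \<Rightarrow> real) \<Rightarrow> nat \<Rightarrow> nat \<Rightarrow> real" where
  "XN f N l = (if l = N then 0 else f (real l / real N))"

definition alpha_seq :: "real \<Rightarrow> (real \<Rightarrow> real) \<Rightarrow> real \<Rightarrow> nat \<Rightarrow> complex" where
  "alpha_seq \<alpha> f x N =
     of_real (real N powr \<alpha>) *
     (\<Sum>l = 0..N. toeplitz_entry (phi \<alpha>) (nat \<lfloor>real N * x\<rfloor>) l * of_real (XN f N l))"

definition alpha_derivable :: "real \<Rightarrow> (real \<Rightarrow> real) \<Rightarrow> real \<Rightarrow> bool" where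
  "alpha_derivable \<alpha> f x \<longleftrightarrow> (\<exists>L. alpha_seq \<alpha> f x \<longlonglongrightarrow> L)"

definition D_alpha :: "real \<Rightarrow> (real \<Rightarrow> real) \<Rightarrow> real \<Rightarrow> complex" where
  "D_alpha \<alpha> f x = lim (alpha_seq \<alpha> f x)"

definition locally_contracting :: "(real \<Rightarrow> real) \<Rightarrow> bool" where
  "locally_contracting f \<longleftrightarrow>
     (\<forall>a b. {a..b} \<subseteq> {0..<1} \<longrightarrow> (\<exists>L. L-lipschitz_on {a..b} f))"

definition L1_weight :: "real \<Rightarrow> (real \<Rightarrow> real) \<Rightarrow> bool" where
  "L1_weight \<beta> f \<longleftrightarrow>
     (\<exists>\<gamma>\<in>{0..\<beta>}. f \<in> O[at_right 0](\<lambda>x. x powr (-\<gamma>)) \<and>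
                   (\<lambda>x. f (1 - x)) \<in> O[at_right 0](\<lambda>x. x powr (-\<gamma>)))"

end

theory Submission
  imports Defs
begin


lemma gb_step:
  fixes a :: real
  shows "real (Suc m) * (a gchoose Suc m) = (a gchoose m) * (a - real m)"
proof -
  have "fact (Suc m) * (a gchoose Suc m) = (\<Prod>i = 0..<Suc m. a - of_nat i)"
    by (rule gbinomial_mult_fact)
  also have "\<dots> = (\<Prod>i = 0..<m. a - of_nat i) * (a - real m)" by simp
  also have "(\<Prod>i = 0..<m. a - of_nat i) = fact m * (a gchoose m)"
    by (rule gbinomial_mult_fact[symmetric])
  finally have "fact (Suc m) * (a gchoose Suc m) = fact m * (a gchoose m) * (a - real m)" .
  then have "fact m * (real (Suc m) * (a gchoose Suc m)) = fact m * ((a gchoose m) * (a - real m))"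
    by (simp add: algebra_simps)
  then show ?thesis by simp
qed

lemma key_ineq:
  fixes \<beta> :: real and m :: nat
  assumes "\<beta> > 0" "m \<ge> 1" "real m \<ge> \<beta>"
  shows "(real m - \<beta>) * (real m + 1) powr \<beta> \<le> real m powr (1 + \<beta>)"
proof -
  have mpos: "real m > 0" using assms by simp
  have e1: "(real m - \<beta>) \<le> real m * exp (- \<beta> / real m)"
  proof -
    have "1 + (- \<beta> / real m) \<le> exp (- \<beta> / real m)" by (rule exp_ge_add_one_self)
    then have "real m * (1 + (- \<beta> / real m)) \<le> real m * exp (- \<beta> / real m)"
      using mpos by (intro mult_left_mono) auto
    moreover have "real m * (1 + (- \<beta> / real m)) = real m - \<beta>" using mpos by (simp add: field_simps)
    ultimately show ?thesis by linarith
  qed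
  have ln1: "ln (real m + 1) \<le> ln (real m) + 1 / real m"
  proof -
    have "real m + 1 = real m * (1 + 1 / real m)" using mpos by (simp add: field_simps)
    then have "ln (real m + 1) = ln (real m * (1 + 1 / real m))" by simp
    also have "\<dots> = ln (real m) + ln (1 + 1 / real m)"
      using mpos by (intro ln_mult_pos) (auto intro: add_pos_nonneg)
    also have "ln (1 + 1 / real m) \<le> 1 / real m" using mpos by (intro ln_add_one_self_le_self) auto
    finally show ?thesis by simp
  qed
  have e2: "(real m + 1) powr \<beta> \<le> real m powr \<beta> * exp (\<beta> / real m)"
  proof -
    have "(real m + 1) powr \<beta> = exp (\<beta> * ln (real m + 1))" using mpos by (simp add: powr_def)
    also have "\<dots> \<le> exp (\<beta> * (ln (real m) + 1 / real m))"
      using ln1 assms(1) by (intro exp_le_cancel_iff[THEN iffD2] mult_left_mono) auto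
    also have "\<dots> = real m powr \<beta> * exp (\<beta> / real m)"
      using mpos by (simp add: powr_def exp_add[symmetric] algebra_simps)
    finally show ?thesis .
  qed
  have "(real m - \<beta>) * (real m + 1) powr \<beta> \<le> (real m * exp (- \<beta> / real m)) * (real m powr \<beta> * exp (\<beta> / real m))"
    using e1 e2 assms by (intro mult_mono) auto
  also have "\<dots> = real m * real m powr \<beta> * (exp (- \<beta> / real m) * exp (\<beta> / real m))" by (simp add: algebra_simps)
  also have "exp (- \<beta> / real m) * exp (\<beta> / real m) = 1" by (simp add: exp_add[symmetric])
  also have "real m * real m powr \<beta> = real m powr (1 + \<beta>)" using mpos by (simp add: powr_add)
  finally show ?thesis by simp
qed

lemma gb_decay:
  fixes \<beta> :: real
  assumes "\<beta> > 0" "n0 \<ge> 1" "real n0 \<ge> \<beta>" "m \<ge> n0"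
  shows "\<bar>\<beta> gchoose m\<bar> * real m powr (1 + \<beta>) \<le> \<bar>\<beta> gchoose n0\<bar> * real n0 powr (1 + \<beta>)"
  using assms(4)
proof (induction m rule: dec_induct)
  case base then show ?case by simp
next
  case (step m)
  have m1: "m \<ge> 1" "real m \<ge> \<beta>" using step assms by auto
  have "real (Suc m) * (\<beta> gchoose Suc m) = (\<beta> gchoose m) * (\<beta> - real m)" by (rule gb_step)
  then have "\<beta> gchoose Suc m = (\<beta> gchoose m) * (\<beta> - real m) / (real m + 1)"
    by (simp add: field_simps)
  then have "\<bar>\<beta> gchoose Suc m\<bar> = \<bar>\<beta> gchoose m\<bar> * \<bar>\<beta> - real m\<bar> / (real m + 1)"
    by (simp add: abs_mult)
  moreover have "\<bar>\<beta> - real m\<bar> = real m - \<beta>" using m1 by simp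
  ultimately have eq: "\<bar>\<beta> gchoose Suc m\<bar> = \<bar>\<beta> gchoose m\<bar> * (real m - \<beta>) / (real m + 1)"
    by simp
  have "\<bar>\<beta> gchoose Suc m\<bar> * real (Suc m) powr (1 + \<beta>)
        = \<bar>\<beta> gchoose m\<bar> * ((real m - \<beta>) * (real m + 1) powr \<beta>)"
    by (simp add: eq powr_add field_simps add.commute)
  also have "\<dots> \<le> \<bar>\<beta> gchoose m\<bar> * real m powr (1 + \<beta>)"
    using key_ineq[OF assms(1) m1] by (intro mult_left_mono) auto
  finally show ?case using step by simp
qed

lemma gb_bound:
  fixes \<beta> :: real
  assumes "\<beta> > 0"
  shows "\<exists>K\<ge>0. \<forall>m\<ge>1. \<bar>\<beta> gchoose m\<bar> \<le> K * real m powr (-1 - \<beta>)"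
proof -
  define n0 where "n0 = max 1 (nat \<lceil>\<beta>\<rceil>)"
  have n0: "n0 \<ge> 1" "real n0 \<ge> \<beta>" unfolding n0_def by auto linarith
  define K where "K = (\<Sum>j\<in>{1..n0}. \<bar>\<beta> gchoose j\<bar> * real j powr (1 + \<beta>))"
  have K0: "K \<ge> 0" unfolding K_def by (intro sum_nonneg) auto
  have Kb: "\<bar>\<beta> gchoose m\<bar> * real m powr (1 + \<beta>) \<le> K" if "m \<ge> 1" for m
  proof (cases "m \<le> n0")
    case True
    then show ?thesis unfolding K_def using that
      by (intro member_le_sum) auto
  next
    case False
    then have "\<bar>\<beta> gchoose m\<bar> * real m powr (1 + \<beta>) \<le> \<bar>\<beta> gchoose n0\<bar> * real n0 powr (1 + \<beta>)"
      using gb_decay[OF assms n0] by auto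
    also have "\<dots> \<le> K" unfolding K_def using n0 by (intro member_le_sum) auto
    finally show ?thesis .
  qed
  then have "\<forall>m\<ge>1. \<bar>\<beta> gchoose m\<bar> \<le> K * real m powr (-1 - \<beta>)"
  proof (intro allI impI)
    fix m :: nat assume "m \<ge> 1"
    then have h: "\<bar>\<beta> gchoose m\<bar> * real m powr (1 + \<beta>) \<le> K" using Kb by auto
    have mp: "real m powr (1 + \<beta>) > 0" using \<open>m \<ge> 1\<close> by simp
    have "real m powr (1 + \<beta>) * real m powr (-1 - \<beta>) = 1"
      using mp by (simp add: powr_add[symmetric])
    then have "\<bar>\<beta> gchoose m\<bar> = (\<bar>\<beta> gchoose m\<bar> * real m powr (1 + \<beta>)) * real m powr (-1 - \<beta>)"
      by (simp add: mult.assoc)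
    also have "\<dots> \<le> K * real m powr (-1 - \<beta>)" using h by (intro mult_right_mono) auto
    finally show "\<bar>\<beta> gchoose m\<bar> \<le> K * real m powr (-1 - \<beta>)" .
  qed
  with K0 show ?thesis by blast
qed



definition cc :: "real \<Rightarrow> real \<Rightarrow> nat \<Rightarrow> real" where
  "cc \<alpha> R l = (\<Sum>n. (\<alpha> gchoose n) * (-R)^n * ((\<alpha> gchoose (n+l)) * R^(n+l)))"

lemma powr_antimono_nat:
  fixes p :: real assumes "p \<le> 0" "1 \<le> l" "l \<le> m"
  shows "real m powr p \<le> real l powr p"
  using assms by (intro powr_mono2') auto

lemma gb_abs_summable:
  fixes \<alpha> :: real assumes "\<alpha> > 0"
  shows "summable (\<lambda>n. \<bar>\<alpha> gchoose n\<bar>)"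
proof -
  obtain K where K: "K \<ge> 0" "\<forall>m\<ge>1. \<bar>\<alpha> gchoose m\<bar> \<le> K * real m powr (-1 - \<alpha>)"
    using gb_bound[OF assms] by blast
  have s: "summable (\<lambda>n. K * real n powr (-1 - \<alpha>))"
    using assms by (intro summable_mult) (simp add: summable_real_powr_iff)
  show ?thesis
  proof (rule summable_comparison_test_ev[OF _ s])
    show "\<forall>\<^sub>F n in sequentially. norm \<bar>\<alpha> gchoose n\<bar> \<le> K * real n powr (- 1 - \<alpha>)"
      by (intro eventually_mono[OF eventually_ge_at_top[of 1]]) (use K(2) in auto)
  qed
qed

lemma cc_summable_bound:
  fixes \<alpha> R :: real and g :: "nat \<Rightarrow> real"
  assumes "\<alpha> > 0" "\<And>n. \<bar>g n\<bar> \<le> \<bar>\<alpha> gchoose n\<bar> * B"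
  shows "summable g" "\<bar>suminf g\<bar> \<le> (\<Sum>n. \<bar>\<alpha> gchoose n\<bar>) * B"
proof -
  have sa: "summable (\<lambda>n. \<bar>\<alpha> gchoose n\<bar> * B)"
    using gb_abs_summable[OF assms(1)] by (intro summable_mult2)
  have sg: "summable (\<lambda>n. \<bar>g n\<bar>)"
    by (rule summable_comparison_test[OF _ sa]) (use assms(2) in auto)
  then show "summable g" by (rule summable_rabs_cancel)
  have "\<bar>suminf g\<bar> \<le> (\<Sum>n. \<bar>g n\<bar>)" by (rule summable_rabs[OF sg])
  also have "\<dots> \<le> (\<Sum>n. \<bar>\<alpha> gchoose n\<bar> * B)" by (intro suminf_le sg sa assms(2))
  also have "\<dots> = (\<Sum>n. \<bar>\<alpha> gchoose n\<bar>) * B" by (rule suminf_mult2[symmetric]) (rule gb_abs_summable[OF assms(1)])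
  finally show "\<bar>suminf g\<bar> \<le> (\<Sum>n. \<bar>\<alpha> gchoose n\<bar>) * B" .
qed

lemma gb_le_const:
  fixes \<alpha> :: real assumes "\<alpha> > 0"
  obtains M where "M \<ge> 0" "\<And>m. \<bar>\<alpha> gchoose m\<bar> \<le> M"
proof -
  obtain K where K: "K \<ge> 0" "\<forall>m\<ge>1. \<bar>\<alpha> gchoose m\<bar> \<le> K * real m powr (-1 - \<alpha>)"
    using gb_bound[OF assms(1)] by blast
  have "\<bar>\<alpha> gchoose m\<bar> \<le> max 1 K" for m
  proof (cases "m = 0")
    case False
    then have "\<bar>\<alpha> gchoose m\<bar> \<le> K * real m powr (-1 - \<alpha>)" using K by auto
    also have "\<dots> \<le> K * 1" using False assms K powr_antimono_nat[of "-1-\<alpha>" 1 m] by (intro mult_left_mono) auto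
    finally show ?thesis by simp
  qed simp
  then show ?thesis using that[of "max 1 K"] by auto
qed

lemma Rp_le1: "0 \<le> R \<Longrightarrow> R \<le> 1 \<Longrightarrow> \<bar>(-R)^n * R^k\<bar> \<le> 1" for R :: real
  by (simp add: abs_mult power_abs power_le_one mult_le_one)

lemma cc_summable:
  fixes \<alpha> R :: real assumes "\<alpha> > 0" "0 \<le> R" "R \<le> 1"
  shows "summable (\<lambda>n. (\<alpha> gchoose n) * (-R)^n * ((\<alpha> gchoose (n+l)) * R^(n+l)))"
proof -
  obtain M where M: "M \<ge> 0" "\<And>m. \<bar>\<alpha> gchoose m\<bar> \<le> M" using gb_le_const[OF assms(1)] by blast
  show ?thesis
  proof (rule cc_summable_bound(1)[OF assms(1), of _ M])
    fix n
    have "\<bar>(\<alpha> gchoose n) * (- R) ^ n * ((\<alpha> gchoose (n + l)) * R ^ (n + l))\<bar>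
        = \<bar>\<alpha> gchoose n\<bar> * (\<bar>(-R)^n * R^(n+l)\<bar> * \<bar>\<alpha> gchoose (n+l)\<bar>)"
      by (simp add: abs_mult)
    also have "\<dots> \<le> \<bar>\<alpha> gchoose n\<bar> * (1 * M)"
      using Rp_le1[OF assms(2,3)] M by (intro mult_left_mono mult_mono) auto
    finally show "\<bar>(\<alpha> gchoose n) * (- R) ^ n * ((\<alpha> gchoose (n + l)) * R ^ (n + l))\<bar>
        \<le> \<bar>\<alpha> gchoose n\<bar> * M" by simp
  qed
qed

lemma cc_bounds:
  fixes \<alpha> :: real
  assumes "0 < \<alpha>" "\<alpha> < 1"
  obtains A B where "A \<ge> 0" "B \<ge> 0"
    "\<And>R l. 0 \<le> R \<Longrightarrow> R \<le> 1 \<Longrightarrow> l \<ge> 1 \<Longrightarrow> \<bar>cc \<alpha> R l\<bar> \<le> A * real l powr (-1 - \<alpha>)"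
    "\<And>R l. 0 \<le> R \<Longrightarrow> R \<le> 1 \<Longrightarrow>
       \<bar>cc \<alpha> R l + cc \<alpha> R (Suc l)\<bar> \<le> B * real (Suc l) powr (-2 - \<alpha>) + (1 - R) * A * real (Suc l) powr (-1 - \<alpha>)"
proof -
  define S where "S = (\<Sum>n. \<bar>\<alpha> gchoose n\<bar>)"
  have S0: "S \<ge> 0" unfolding S_def by (intro suminf_nonneg gb_abs_summable assms) auto
  obtain K where K: "K \<ge> 0" "\<forall>m\<ge>1. \<bar>\<alpha> gchoose m\<bar> \<le> K * real m powr (-1 - \<alpha>)"
    using gb_bound[OF assms(1)] by blast
  obtain K2 where K2: "K2 \<ge> 0" "\<forall>m\<ge>1. \<bar>(\<alpha>+1) gchoose m\<bar> \<le> K2 * real m powr (-1 - (\<alpha>+1))"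
    using gb_bound[of "\<alpha>+1"] assms by auto
  have b1: "\<bar>cc \<alpha> R l\<bar> \<le> S * (K * real l powr (-1 - \<alpha>))" if R: "0 \<le> R" "R \<le> 1" and l: "l \<ge> 1" for R l
    unfolding cc_def S_def
  proof (rule cc_summable_bound(2)[OF assms(1)])
    fix n
    have "\<bar>\<alpha> gchoose (n+l)\<bar> \<le> K * real (n+l) powr (-1 - \<alpha>)" using K(2)[rule_format, of "n+l"] l by simp
    also have "\<dots> \<le> K * real l powr (-1 - \<alpha>)"
      using K l assms by (intro mult_left_mono powr_antimono_nat) auto
    finally have h: "\<bar>\<alpha> gchoose (n+l)\<bar> \<le> K * real l powr (-1 - \<alpha>)" .
    have "\<bar>(\<alpha> gchoose n) * (- R) ^ n * ((\<alpha> gchoose (n + l)) * R ^ (n + l))\<bar>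
        = \<bar>\<alpha> gchoose n\<bar> * (\<bar>(-R)^n * R^(n+l)\<bar> * \<bar>\<alpha> gchoose (n+l)\<bar>)"
      by (simp add: abs_mult)
    also have "\<dots> \<le> \<bar>\<alpha> gchoose n\<bar> * (1 * (K * real l powr (-1 - \<alpha>)))"
      using Rp_le1[OF R] h by (intro mult_left_mono mult_mono) auto
    finally show "\<bar>(\<alpha> gchoose n) * (- R) ^ n * ((\<alpha> gchoose (n + l)) * R ^ (n + l))\<bar>
        \<le> \<bar>\<alpha> gchoose n\<bar> * (K * real l powr (-1 - \<alpha>))" by simp
  qed
  have b2: "\<bar>cc \<alpha> R l + cc \<alpha> R (Suc l)\<bar> \<le> S * (K2 * real (Suc l) powr (-2 - \<alpha>) + (1 - R) * K * real (Suc l) powr (-1 - \<alpha>))"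
    if R: "0 \<le> R" "R \<le> 1" for R l
  proof -
    have "cc \<alpha> R l + cc \<alpha> R (Suc l) =
      (\<Sum>n. (\<alpha> gchoose n) * (-R)^n * ((\<alpha> gchoose (n+l)) * R^(n+l)) + (\<alpha> gchoose n) * (-R)^n * ((\<alpha> gchoose (n+Suc l)) * R^(n+Suc l)))"
      unfolding cc_def by (intro suminf_add cc_summable assms R)
    also have "\<bar>\<dots>\<bar> \<le> S * (K2 * real (Suc l) powr (-2 - \<alpha>) + (1 - R) * K * real (Suc l) powr (-1 - \<alpha>))"
      unfolding S_def
    proof (rule cc_summable_bound(2)[OF assms(1)])
      fix n
      define m where "m = Suc (n + l)"
      have m1: "m \<ge> 1" "m \<ge> Suc l" unfolding m_def by auto
      have eq: "(\<alpha> gchoose n) * (-R)^n * ((\<alpha> gchoose (n+l)) * R^(n+l)) + (\<alpha> gchoose n) * (-R)^n * ((\<alpha> gchoose (n+Suc l)) * R^(n+Suc l))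
         = (\<alpha> gchoose n) * ((-R)^n * R^(n+l)) * (((\<alpha> + 1) gchoose m) - (1 - R) * (\<alpha> gchoose m))"
      proof -
        have gs: "(\<alpha> + 1) gchoose m = (\<alpha> gchoose (n+l)) + (\<alpha> gchoose m)"
          unfolding m_def by (rule gbinomial_Suc_Suc)
        have "n + Suc l = m" using m_def by simp
        then show ?thesis unfolding gs by (simp add: m_def algebra_simps)
      qed
      have "\<bar>((\<alpha> + 1) gchoose m) - (1 - R) * (\<alpha> gchoose m)\<bar> \<le> \<bar>(\<alpha> + 1) gchoose m\<bar> + (1 - R) * \<bar>\<alpha> gchoose m\<bar>"
        using R by (simp add: abs_mult abs_triangle_ineq4[THEN order_trans])
      also have "\<dots> \<le> K2 * real (Suc l) powr (-2 - \<alpha>) + (1 - R) * (K * real (Suc l) powr (-1 - \<alpha>))"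
      proof (intro add_mono mult_left_mono)
        have "\<bar>(\<alpha> + 1) gchoose m\<bar> \<le> K2 * real m powr (-1 - (\<alpha>+1))" using K2 m1 by auto
        also have "\<dots> \<le> K2 * real (Suc l) powr (-2 - \<alpha>)"
          using K2 m1 assms powr_antimono_nat[of "-2-\<alpha>" "Suc l" m] by (intro mult_left_mono) auto
        finally show "\<bar>(\<alpha> + 1) gchoose m\<bar> \<le> K2 * real (Suc l) powr (-2 - \<alpha>)" .
        have "\<bar>\<alpha> gchoose m\<bar> \<le> K * real m powr (-1 - \<alpha>)" using K m1 by auto
        also have "\<dots> \<le> K * real (Suc l) powr (-1 - \<alpha>)"
          using K m1 assms powr_antimono_nat[of "-1-\<alpha>" "Suc l" m] by (intro mult_left_mono) auto
        finally show "\<bar>\<alpha> gchoose m\<bar> \<le> K * real (Suc l) powr (-1 - \<alpha>)" .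
      qed (use R in auto)
      finally have h: "\<bar>((\<alpha> + 1) gchoose m) - (1 - R) * (\<alpha> gchoose m)\<bar> \<le> K2 * real (Suc l) powr (-2 - \<alpha>) + (1 - R) * K * real (Suc l) powr (-1 - \<alpha>)"
        by simp
      have "\<bar>(\<alpha> gchoose n) * ((-R)^n * R^(n+l)) * (((\<alpha> + 1) gchoose m) - (1 - R) * (\<alpha> gchoose m))\<bar>
        = \<bar>\<alpha> gchoose n\<bar> * (\<bar>(-R)^n * R^(n+l)\<bar> * \<bar>((\<alpha> + 1) gchoose m) - (1 - R) * (\<alpha> gchoose m)\<bar>)"
        by (simp add: abs_mult)
      also have "\<dots> \<le> \<bar>\<alpha> gchoose n\<bar> * (1 * (K2 * real (Suc l) powr (-2 - \<alpha>) + (1 - R) * K * real (Suc l) powr (-1 - \<alpha>)))"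
        using Rp_le1[OF R] h by (intro mult_left_mono mult_mono) auto
      finally show "\<bar>(\<alpha> gchoose n) * (-R)^n * ((\<alpha> gchoose (n+l)) * R^(n+l)) + (\<alpha> gchoose n) * (-R)^n * ((\<alpha> gchoose (n+Suc l)) * R^(n+Suc l))\<bar>
        \<le> \<bar>\<alpha> gchoose n\<bar> * (K2 * real (Suc l) powr (-2 - \<alpha>) + (1 - R) * K * real (Suc l) powr (-1 - \<alpha>))"
        by (simp only: eq)
    qed
    finally show ?thesis .
  qed
  show ?thesis
  proof (rule that[of "S * K" "S * K2"])
    show "0 \<le> S * K" "0 \<le> S * K2" using S0 K K2 by auto
    show "\<bar>cc \<alpha> R l\<bar> \<le> S * K * real l powr (- 1 - \<alpha>)" if "0 \<le> R" "R \<le> 1" "1 \<le> l" for R l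
      using b1[OF that] by (simp add: mult.assoc)
    show "\<bar>cc \<alpha> R l + cc \<alpha> R (Suc l)\<bar> \<le> S * K2 * real (Suc l) powr (- 2 - \<alpha>) + (1 - R) * (S * K) * real (Suc l) powr (- 1 - \<alpha>)"
      if "0 \<le> R" "R \<le> 1" for R l
      using b2[OF that] by (simp add: algebra_simps)
  qed
qed



lemma series_integral:
  fixes v :: "nat \<Rightarrow> real \<Rightarrow> complex" and M :: "nat \<Rightarrow> real"
  assumes c: "\<And>m. continuous_on {a..b} (v m)"
    and b: "\<And>m x. x \<in> {a..b} \<Longrightarrow> norm (v m x) \<le> M m" and s: "summable M"
  shows "(\<lambda>m. integral {a..b} (v m)) sums integral {a..b} (\<lambda>x. \<Sum>m. v m x)"
proof -
  have u: "uniform_limit {a..b} (\<lambda>n x. \<Sum>i<n. v i x) (\<lambda>x. \<Sum>m. v m x) sequentially"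
    by (rule Weierstrass_m_test[OF b s])
  have cn: "continuous_on {a..b} (\<lambda>x. \<Sum>i<n. v i x)" for n
    by (intro continuous_intros c)
  obtain I J where I: "\<And>n. ((\<lambda>x. \<Sum>i<n. v i x) has_integral I n) {a..b}"
    and J: "((\<lambda>x. \<Sum>m. v m x) has_integral J) {a..b}" and IJ: "I \<longlonglongrightarrow> J"
    by (rule uniform_limit_integral[OF u cn]) auto
  have In: "I n = (\<Sum>i<n. integral {a..b} (v i))" for n
  proof -
    have "((\<lambda>x. \<Sum>i<n. v i x) has_integral (\<Sum>i<n. integral {a..b} (v i))) {a..b}"
      by (intro has_integral_sum) (auto intro!: integrable_integral integrable_continuous_real c)
    then show ?thesis using I[of n] by (rule has_integral_unique[symmetric])
  qed
  moreover have "J = integral {a..b} (\<lambda>x. \<Sum>m. v m x)" using J by (rule integral_unique[symmetric])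
  moreover have "I = (\<lambda>n. \<Sum>i<n. integral {a..b} (v i))" using In by (rule ext)
  ultimately show ?thesis using IJ unfolding sums_def by simp
qed

lemma exp_int_integral:
  fixes j :: int
  shows "integral {-pi..pi} (\<lambda>\<theta>. exp (\<i> * of_int j * of_real \<theta>)) = (if j = 0 then 2 * pi else 0)"
proof (cases "j = 0")
  case True then show ?thesis by (simp add: scaleR_conv_of_real)
next
  case False
  define F where "F = (\<lambda>x::complex. exp (\<i> * of_int j * x) / (\<i> * of_int j))"
  have d: "((\<lambda>x. F (of_real x)) has_vector_derivative exp (\<i> * of_int j * of_real x)) (at x within {-pi..pi})" for x
    unfolding F_def using False
    by (intro has_vector_derivative_real_field) (auto intro!: derivative_eq_intros)
  have "((\<lambda>\<theta>. exp (\<i> * of_int j * of_real \<theta>)) has_integral (F (of_real pi) - F (of_real (-pi)))) {-pi..pi}"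
    by (rule fundamental_theorem_of_calculus) (use d in auto)
  moreover have "F (of_real pi) = F (of_real (-pi))"
  proof -
    have "exp (\<i> * of_int j * of_real pi) = exp (\<i> * of_int j * of_real (-pi)) * exp (\<i> * (of_real pi * 2)) ^ (nat \<bar>j\<bar>)
          \<or> exp (\<i> * of_int j * of_real (-pi)) = exp (\<i> * of_int j * of_real pi) * exp (\<i> * (of_real pi * 2)) ^ (nat \<bar>j\<bar>)"
    proof (cases "j \<ge> 0")
      case True
      have "exp (\<i> * of_int j * of_real (-pi)) * exp (\<i> * (of_real pi * 2)) ^ (nat \<bar>j\<bar>)
          = exp (\<i> * of_int j * of_real (-pi) + of_nat (nat \<bar>j\<bar>) * (\<i> * (of_real pi * 2)))"
        by (simp only: exp_add exp_of_nat_mult)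
      also have "\<dots> = exp (\<i> * of_int j * of_real pi)"
      proof -
        have "\<bar>j\<bar> = j" using True by simp
        then show ?thesis using True by (simp add: algebra_simps)
      qed
      finally show ?thesis by simp
    next
      case False
      have "exp (\<i> * of_int j * of_real pi) * exp (\<i> * (of_real pi * 2)) ^ (nat \<bar>j\<bar>)
          = exp (\<i> * of_int j * of_real pi + of_nat (nat \<bar>j\<bar>) * (\<i> * (of_real pi * 2)))"
        by (simp only: exp_add exp_of_nat_mult)
      also have "\<dots> = exp (\<i> * of_int j * of_real (-pi))"
      proof -
        have "\<bar>j\<bar> = - j" using False by simp
        then show ?thesis using False by (simp add: algebra_simps)
      qed
      finally show ?thesis by simp
    qed
    then show ?thesis unfolding F_def by auto
  qed
  ultimately show ?thesis using False by (simp add: integral_unique)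
qed



lemma of_real_gchoose: "complex_of_real (a gchoose n) = (complex_of_real a) gchoose n"
  by (simp add: gbinomial_altdef_of_nat of_real_prod)

lemma exp_mult_int:
  "exp (\<i> * of_nat k * of_real \<theta>) * exp (- \<i> * of_nat m * of_real \<theta>) = exp (\<i> * of_int (int k - int m) * of_real \<theta>)"
  by (simp add: exp_add[symmetric] algebra_simps)

definition QQ :: "real \<Rightarrow> real \<Rightarrow> real \<Rightarrow> complex" where
  "QQ \<alpha> R \<theta> = (1 + of_real R * exp (- \<i> * of_real \<theta>)) powr (of_real \<alpha>)"
definition PP :: "real \<Rightarrow> real \<Rightarrow> real \<Rightarrow> complex" where
  "PP \<alpha> R \<theta> = (1 - of_real R * exp (\<i> * of_real \<theta>)) powr (of_real \<alpha>)"

lemma phi_R_PQ: "phi_R \<alpha> R \<theta> = PP \<alpha> R \<theta> * QQ \<alpha> R \<theta>"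
  by (simp add: phi_R_def PP_def QQ_def)

lemma QQ_sums:
  assumes "0 \<le> R" "R < 1"
  shows "(\<lambda>m. of_real ((\<alpha> gchoose m) * R^m) * exp (- \<i> * of_nat m * of_real \<theta>)) sums QQ \<alpha> R \<theta>"
proof -
  have "norm (of_real R * exp (- \<i> * of_real \<theta>)) < 1" using assms by (simp add: norm_mult)
  from gen_binomial_complex[OF this, of "of_real \<alpha>"]
  have "(\<lambda>n. (of_real \<alpha> gchoose n) * (of_real R * exp (- \<i> * of_real \<theta>)) ^ n) sums QQ \<alpha> R \<theta>"
    by (simp add: QQ_def)
  moreover have "(of_real \<alpha> gchoose n) * (of_real R * exp (- \<i> * of_real \<theta>)) ^ n
     = of_real ((\<alpha> gchoose n) * R^n) * exp (- \<i> * of_nat n * of_real \<theta>)" for n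
    by (simp add: of_real_gchoose power_mult_distrib exp_of_nat_mult[symmetric] algebra_simps)
  ultimately show ?thesis by simp
qed

lemma PP_sums:
  assumes "0 \<le> R" "R < 1"
  shows "(\<lambda>n. of_real ((\<alpha> gchoose n) * (-R)^n) * exp (\<i> * of_nat n * of_real \<theta>)) sums PP \<alpha> R \<theta>"
proof -
  have "norm (- of_real R * exp (\<i> * of_real \<theta>)) < 1" using assms by (simp add: norm_mult)
  from gen_binomial_complex[OF this, of "of_real \<alpha>"]
  have "(\<lambda>n. (of_real \<alpha> gchoose n) * (- of_real R * exp (\<i> * of_real \<theta>)) ^ n) sums PP \<alpha> R \<theta>"
    by (simp add: PP_def)
  moreover have "(of_real \<alpha> gchoose n) * (- of_real R * exp (\<i> * of_real \<theta>)) ^ n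
     = of_real ((\<alpha> gchoose n) * (-R)^n) * exp (\<i> * of_nat n * of_real \<theta>)" for n
  proof -
    have e1: "(- of_real R * exp (\<i> * of_real \<theta>)) = of_real (-R) * exp (\<i> * of_real \<theta>)" by simp
    have e2: "exp (\<i> * of_nat n * of_real \<theta>) = exp (\<i> * of_real \<theta>) ^ n"
      by (simp add: exp_of_nat_mult[symmetric] algebra_simps)
    show ?thesis unfolding e1 e2 by (simp only: power_mult_distrib of_real_power of_real_mult of_real_gchoose mult.assoc)
  qed
  ultimately show ?thesis by simp
qed

lemma QQ_cont:
  assumes "0 \<le> R" "R \<le> 1" "\<alpha> > 0"
  shows "continuous_on A (QQ \<alpha> R)"
  unfolding QQ_def
proof (intro continuous_intros)
  show "A \<subseteq> {z. 0 \<le> Re (1 + complex_of_real R * exp (- \<i> * complex_of_real z)) \<or>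
       Im (1 + complex_of_real R * exp (- \<i> * complex_of_real z)) \<noteq> 0}"
  proof
    fix z assume "z \<in> A"
    have eqRe: "Re (1 + complex_of_real R * exp (- \<i> * complex_of_real z)) = 1 + R * cos z"
      by (simp add: Re_exp)
    moreover have "R * cos z \<ge> - 1"
    proof -
      have "\<bar>R * cos z\<bar> \<le> 1" using assms by (simp add: abs_mult mult_le_one)
      then show ?thesis by linarith
    qed
    ultimately show "z \<in> {z. 0 \<le> Re (1 + complex_of_real R * exp (- \<i> * complex_of_real z)) \<or>
       Im (1 + complex_of_real R * exp (- \<i> * complex_of_real z)) \<noteq> 0}"
      unfolding mem_Collect_eq eqRe by linarith
  qed
qed (use assms in auto)

lemma PP_cont:
  assumes "0 \<le> R" "R \<le> 1" "\<alpha> > 0"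
  shows "continuous_on A (PP \<alpha> R)"
  unfolding PP_def
proof (intro continuous_intros)
  show "A \<subseteq> {z. 0 \<le> Re (1 - complex_of_real R * exp (\<i> * complex_of_real z)) \<or>
       Im (1 - complex_of_real R * exp (\<i> * complex_of_real z)) \<noteq> 0}"
  proof
    fix z assume "z \<in> A"
    have eqRe: "Re (1 - complex_of_real R * exp (\<i> * complex_of_real z)) = 1 - R * cos z"
      by (simp add: Re_exp)
    moreover have "R * cos z \<le> 1"
    proof -
      have "\<bar>R * cos z\<bar> \<le> 1" using assms by (simp add: abs_mult mult_le_one)
      then show ?thesis by linarith
    qed
    ultimately show "z \<in> {z. 0 \<le> Re (1 - complex_of_real R * exp (\<i> * complex_of_real z)) \<or>
       Im (1 - complex_of_real R * exp (\<i> * complex_of_real z)) \<noteq> 0}"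
      unfolding mem_Collect_eq eqRe by linarith
  qed
qed (use assms in auto)

lemma norm_powr_le2:
  fixes w :: complex assumes "norm w \<le> 2" "\<alpha> \<ge> 0"
  shows "norm (w powr of_real \<alpha>) \<le> 2 powr \<alpha>"
proof -
  have "norm (w powr of_real \<alpha>) = norm w powr \<alpha>" by (simp add: norm_powr_real_powr')
  also have "\<dots> \<le> 2 powr \<alpha>" using assms by (intro powr_mono2) auto
  finally show ?thesis .
qed

lemma QQ_bound: assumes "0 \<le> R" "R \<le> 1" "\<alpha> \<ge> 0" shows "norm (QQ \<alpha> R \<theta>) \<le> 2 powr \<alpha>"
  unfolding QQ_def
proof (rule norm_powr_le2[OF _ assms(3)])
  have "norm (1 + complex_of_real R * exp (- \<i> * complex_of_real \<theta>)) \<le> 1 + norm (complex_of_real R * exp (- \<i> * complex_of_real \<theta>))"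
    by (metis norm_one norm_triangle_ineq)
  also have "\<dots> \<le> 2" using assms by (simp add: norm_mult)
  finally show "norm (1 + complex_of_real R * exp (- \<i> * complex_of_real \<theta>)) \<le> 2" .
qed

lemma PP_bound: assumes "0 \<le> R" "R \<le> 1" "\<alpha> \<ge> 0" shows "norm (PP \<alpha> R \<theta>) \<le> 2 powr \<alpha>"
  unfolding PP_def
proof (rule norm_powr_le2[OF _ assms(3)])
  have "norm (1 - complex_of_real R * exp (\<i> * complex_of_real \<theta>)) \<le> 1 + norm (complex_of_real R * exp (\<i> * complex_of_real \<theta>))"
    by (metis norm_one norm_triangle_ineq4)
  also have "\<dots> \<le> 2" using assms by (simp add: norm_mult)
  finally show "norm (1 - complex_of_real R * exp (\<i> * complex_of_real \<theta>)) \<le> 2" .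
qed



lemma integral_cmult:
  fixes c :: complex
  assumes "f integrable_on S"
  shows "integral S (\<lambda>x. c * f x) = c * integral S f"
  by (rule integral_unique) (intro has_integral_mult_right integrable_integral assms)

lemma exp_integrable: "(\<lambda>\<theta>. exp (\<i> * of_int j * of_real \<theta>)) integrable_on {-pi..pi}"
  by (intro integrable_continuous_real continuous_intros)

lemma QQ_moment:
  assumes "0 \<le> R" "R < 1" "\<alpha> > 0"
  shows "integral {-pi..pi} (\<lambda>\<theta>. exp (\<i> * of_nat k * of_real \<theta>) * QQ \<alpha> R \<theta>) = complex_of_real (2 * pi) * of_real ((\<alpha> gchoose k) * R^k)"
proof -
  define v where "v = (\<lambda>m \<theta>. exp (\<i> * of_nat k * of_real \<theta>) * (of_real ((\<alpha> gchoose m) * R^m) * exp (- \<i> * of_nat m * of_real \<theta>)))"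
  have veq: "v m \<theta> = of_real ((\<alpha> gchoose m) * R^m) * exp (\<i> * of_int (int k - int m) * of_real \<theta>)" for m \<theta>
    unfolding v_def exp_mult_int[symmetric] by (simp add: algebra_simps)
  have S1: "(\<lambda>m. integral {-pi..pi} (v m)) sums integral {-pi..pi} (\<lambda>x. \<Sum>m. v m x)"
  proof (rule series_integral)
    show "continuous_on {-pi..pi} (v m)" for m unfolding v_def by (intro continuous_intros)
    show "norm (v m x) \<le> \<bar>\<alpha> gchoose m\<bar> * R^m" for m x
      unfolding v_def using assms by (simp add: norm_mult abs_mult power_abs norm_power)
    show "summable (\<lambda>m. \<bar>\<alpha> gchoose m\<bar> * R^m)"
    proof (rule summable_comparison_test[OF _ gb_abs_summable[OF assms(3)]])
      show "\<exists>N. \<forall>n\<ge>N. norm (\<bar>\<alpha> gchoose n\<bar> * R ^ n) \<le> \<bar>\<alpha> gchoose n\<bar>"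
      proof (intro exI allI impI)
        fix n :: nat
        have r: "R^n \<le> 1" using assms by (intro power_le_one) auto
        have "norm (\<bar>\<alpha> gchoose n\<bar> * R ^ n) = \<bar>\<alpha> gchoose n\<bar> * R ^ n" using assms by simp
        also have "\<dots> \<le> \<bar>\<alpha> gchoose n\<bar> * 1" by (rule mult_left_mono[OF r]) simp
        finally show "norm (\<bar>\<alpha> gchoose n\<bar> * R ^ n) \<le> \<bar>\<alpha> gchoose n\<bar>" by simp
      qed
    qed
  qed
  have S2: "(\<lambda>x. \<Sum>m. v m x) = (\<lambda>\<theta>. exp (\<i> * of_nat k * of_real \<theta>) * QQ \<alpha> R \<theta>)"
  proof
    fix \<theta>
    show "(\<Sum>m. v m \<theta>) = exp (\<i> * of_nat k * of_real \<theta>) * QQ \<alpha> R \<theta>"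
      unfolding v_def by (rule sums_unique[symmetric]) (intro sums_mult QQ_sums assms)
  qed
  have S3: "integral {-pi..pi} (v m) = (if m = k then complex_of_real (2 * pi) * of_real ((\<alpha> gchoose k) * R^k) else 0)" for m
    unfolding veq
    apply (subst integral_cmult[OF exp_integrable], subst exp_int_integral)
    apply (cases "m = k")
     apply (simp add: mult.commute)
    apply simp
    done
  have S4: "(\<lambda>m. integral {-pi..pi} (v m)) = (\<lambda>m. if m = k then complex_of_real (2 * pi) * of_real ((\<alpha> gchoose k) * R^k) else 0)"
    by (intro ext S3)
  from S1 have S5: "(\<lambda>m. if m = k then complex_of_real (2 * pi) * of_real ((\<alpha> gchoose k) * R^k) else 0) sums
      integral {-pi..pi} (\<lambda>\<theta>. exp (\<i> * of_nat k * of_real \<theta>) * QQ \<alpha> R \<theta>)" unfolding S4 S2 .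
  have S6: "(\<lambda>m. if m = k then complex_of_real (2 * pi) * of_real ((\<alpha> gchoose k) * R^k) else (0::complex)) sums
      (complex_of_real (2 * pi) * of_real ((\<alpha> gchoose k) * R^k))"
    by (rule sums_single)
  show ?thesis by (rule sums_unique2[OF S5 S6])
qed
lemma fc_phi_R:
  assumes "0 \<le> R" "R < 1" "\<alpha> > 0"
  shows "fourier_coeff (phi_R \<alpha> R) (- int l) = of_real (cc \<alpha> R l)"
proof -
  define t where "t = (\<lambda>n. (\<alpha> gchoose n) * (-R)^n * ((\<alpha> gchoose (n+l)) * R^(n+l)))"
  define p where "p = (\<lambda>n \<theta>. of_real ((\<alpha> gchoose n) * (-R)^n) * (exp (\<i> * of_nat (n + l) * of_real \<theta>) * QQ \<alpha> R \<theta>))"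
  have S1: "(\<lambda>n. integral {-pi..pi} (p n)) sums integral {-pi..pi} (\<lambda>x. \<Sum>n. p n x)"
  proof (rule series_integral)
    show "continuous_on {-pi..pi} (p n)" for n unfolding p_def
      by (intro continuous_intros QQ_cont) (use assms in auto)
    show "norm (p n x) \<le> \<bar>\<alpha> gchoose n\<bar> * 2 powr \<alpha>" for n x
    proof -
      have "norm (p n x) = \<bar>\<alpha> gchoose n\<bar> * R^n * norm (QQ \<alpha> R x)"
        unfolding p_def using assms by (simp add: norm_mult abs_mult power_abs norm_power)
      also have "\<dots> \<le> \<bar>\<alpha> gchoose n\<bar> * (1 * 2 powr \<alpha>)"
      proof -
        have r: "R^n * norm (QQ \<alpha> R x) \<le> 1 * 2 powr \<alpha>"
          by (rule mult_mono) (use assms QQ_bound[of R \<alpha> x] in \<open>auto intro: power_le_one\<close>)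
        show ?thesis unfolding mult.assoc by (rule mult_left_mono[OF r]) simp
      qed
      finally show ?thesis by simp
    qed
    show "summable (\<lambda>n. \<bar>\<alpha> gchoose n\<bar> * 2 powr \<alpha>)"
      by (intro summable_mult2 gb_abs_summable assms)
  qed
  have S2: "(\<lambda>x. \<Sum>n. p n x) = (\<lambda>\<theta>. phi_R \<alpha> R \<theta> * exp (- \<i> * of_int (- int l) * of_real \<theta>))"
  proof
    fix \<theta>
    have A: "(\<lambda>n. of_real ((\<alpha> gchoose n) * (-R)^n) * exp (\<i> * of_nat n * of_real \<theta>) * (QQ \<alpha> R \<theta> * exp (\<i> * of_nat l * of_real \<theta>)))
        sums (PP \<alpha> R \<theta> * (QQ \<alpha> R \<theta> * exp (\<i> * of_nat l * of_real \<theta>)))"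
      by (intro sums_mult2 PP_sums assms)
    have B: "of_real ((\<alpha> gchoose n) * (-R)^n) * exp (\<i> * of_nat n * of_real \<theta>) * (QQ \<alpha> R \<theta> * exp (\<i> * of_nat l * of_real \<theta>))
        = p n \<theta>" for n
    proof -
      have e: "exp (\<i> * of_nat n * of_real \<theta>) * exp (\<i> * of_nat l * of_real \<theta>) = exp (\<i> * of_nat (n + l) * of_real \<theta>)"
        by (simp add: exp_add[symmetric] algebra_simps)
      show ?thesis unfolding p_def e[symmetric] by (simp only: mult_ac)
    qed
    from A have "(\<lambda>n. p n \<theta>) sums (PP \<alpha> R \<theta> * (QQ \<alpha> R \<theta> * exp (\<i> * of_nat l * of_real \<theta>)))"
      unfolding B .
    then have "(\<Sum>n. p n \<theta>) = PP \<alpha> R \<theta> * (QQ \<alpha> R \<theta> * exp (\<i> * of_nat l * of_real \<theta>))"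
      by (rule sums_unique[symmetric])
    also have "exp (\<i> * of_nat l * of_real \<theta>) = exp (- \<i> * of_int (- int l) * of_real \<theta>)" by simp
    finally show "(\<Sum>n. p n \<theta>) = phi_R \<alpha> R \<theta> * exp (- \<i> * of_int (- int l) * of_real \<theta>)"
      unfolding phi_R_PQ by (simp only: mult.assoc)
  qed
  have S3: "integral {-pi..pi} (p n) = complex_of_real (2 * pi) * of_real (t n)" for n
  proof -
    have "integral {-pi..pi} (p n) = of_real ((\<alpha> gchoose n) * (-R)^n) * integral {-pi..pi} (\<lambda>\<theta>. exp (\<i> * of_nat (n + l) * of_real \<theta>) * QQ \<alpha> R \<theta>)"
      unfolding p_def
      by (rule integral_cmult, intro integrable_continuous_real continuous_intros QQ_cont) (use assms in auto)
    also have "\<dots> = of_real ((\<alpha> gchoose n) * (-R)^n) * (complex_of_real (2 * pi) * of_real ((\<alpha> gchoose (n+l)) * R^(n+l)))"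
      unfolding QQ_moment[OF assms, of "n+l"] ..
    also have "\<dots> = complex_of_real (2 * pi) * of_real (t n)"
      unfolding t_def by (simp only: of_real_mult mult_ac)
    finally show ?thesis .
  qed
  have S4: "(\<lambda>n. integral {-pi..pi} (p n)) = (\<lambda>n. complex_of_real (2 * pi) * of_real (t n))"
    by (intro ext S3)
  from S1 have s: "(\<lambda>n. complex_of_real (2 * pi) * of_real (t n))
     sums integral {-pi..pi} (\<lambda>\<theta>. phi_R \<alpha> R \<theta> * exp (- \<i> * of_int (- int l) * of_real \<theta>))"
    unfolding S4 S2 .
  have "(\<lambda>n. complex_of_real (t n)) sums complex_of_real (cc \<alpha> R l)"
    unfolding sums_of_real_iff cc_def t_def
    by (intro summable_sums cc_summable assms) (use assms in auto)
  then have s2: "(\<lambda>n. complex_of_real (2 * pi) * of_real (t n)) sums (complex_of_real (2 * pi) * of_real (cc \<alpha> R l))"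
    by (rule sums_mult)
  have "integral {-pi..pi} (\<lambda>\<theta>. phi_R \<alpha> R \<theta> * exp (- \<i> * of_int (- int l) * of_real \<theta>)) = complex_of_real (2 * pi) * of_real (cc \<alpha> R l)"
    by (rule sums_unique2[OF s s2])
  then show ?thesis unfolding fourier_coeff_def by simp
qed



lemma base_ok1: "(1 - exp (\<i> * complex_of_real \<theta>)) \<notin> \<real>\<^sub>\<le>\<^sub>0 \<or> (1 - exp (\<i> * complex_of_real \<theta>)) = 0"
proof (rule disjCI)
  assume "1 - exp (\<i> * complex_of_real \<theta>) \<noteq> 0"
  show "1 - exp (\<i> * complex_of_real \<theta>) \<notin> \<real>\<^sub>\<le>\<^sub>0"
  proof
    assume h: "1 - exp (\<i> * complex_of_real \<theta>) \<in> \<real>\<^sub>\<le>\<^sub>0"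
    have re: "Re (1 - exp (\<i> * complex_of_real \<theta>)) = 1 - cos \<theta>" by (simp add: Re_exp)
    have im: "Im (1 - exp (\<i> * complex_of_real \<theta>)) = - sin \<theta>" by (simp add: Im_exp)
    from h have "Re (1 - exp (\<i> * complex_of_real \<theta>)) \<le> 0" "Im (1 - exp (\<i> * complex_of_real \<theta>)) = 0"
      by (auto simp: complex_nonpos_Reals_iff)
    then have "cos \<theta> \<ge> 1" "sin \<theta> = 0" using re im by auto
    then have "cos \<theta> = 1" using cos_le_one[of \<theta>] by linarith
    have "exp (\<i> * complex_of_real \<theta>) = cis \<theta>" by (simp add: cis_conv_exp)
    with \<open>sin \<theta> = 0\<close> \<open>cos \<theta> = 1\<close> have "1 - exp (\<i> * complex_of_real \<theta>) = 0"
      by (simp add: complex_eq_iff)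
    with \<open>1 - exp (\<i> * complex_of_real \<theta>) \<noteq> 0\<close> show False by simp
  qed
qed

lemma base_ok2: "(1 + exp (- \<i> * complex_of_real \<theta>)) \<notin> \<real>\<^sub>\<le>\<^sub>0 \<or> (1 + exp (- \<i> * complex_of_real \<theta>)) = 0"
proof (rule disjCI)
  assume "1 + exp (- \<i> * complex_of_real \<theta>) \<noteq> 0"
  show "1 + exp (- \<i> * complex_of_real \<theta>) \<notin> \<real>\<^sub>\<le>\<^sub>0"
  proof
    assume h: "1 + exp (- \<i> * complex_of_real \<theta>) \<in> \<real>\<^sub>\<le>\<^sub>0"
    have re: "Re (1 + exp (- \<i> * complex_of_real \<theta>)) = 1 + cos \<theta>" by (simp add: Re_exp)
    have im: "Im (1 + exp (- \<i> * complex_of_real \<theta>)) = - sin \<theta>" by (simp add: Im_exp)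
    from h have "Re (1 + exp (- \<i> * complex_of_real \<theta>)) \<le> 0" "Im (1 + exp (- \<i> * complex_of_real \<theta>)) = 0"
      by (auto simp: complex_nonpos_Reals_iff)
    then have "cos \<theta> \<le> -1" "sin \<theta> = 0" using re im by auto
    then have "cos \<theta> = -1" using cos_ge_minus_one[of \<theta>] by linarith
    have "exp (- \<i> * complex_of_real \<theta>) = cis (- \<theta>)" by (simp add: cis_conv_exp)
    with \<open>sin \<theta> = 0\<close> \<open>cos \<theta> = -1\<close> have "1 + exp (- \<i> * complex_of_real \<theta>) = 0"
      by (simp add: complex_eq_iff)
    with \<open>1 + exp (- \<i> * complex_of_real \<theta>) \<noteq> 0\<close> show False by simp
  qed
qed

lemma phi_R_tendsto:
  assumes "\<alpha> > 0" "(g \<longlongrightarrow> 1) F"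
  shows "((\<lambda>x. phi_R \<alpha> (g x) \<theta>) \<longlongrightarrow> phi_R \<alpha> 1 \<theta>) F"
proof -
  have g': "((\<lambda>x. complex_of_real (g x)) \<longlongrightarrow> 1) F"
    using tendsto_of_real[OF assms(2), where 'a=complex] by simp
  have ga: "((\<lambda>x. complex_of_real (g x) * exp (\<i> * of_real \<theta>)) \<longlongrightarrow> exp (\<i> * of_real \<theta>)) F"
    using tendsto_mult[OF g' tendsto_const, of "exp (\<i> * of_real \<theta>)"] by simp
  have gb: "((\<lambda>x. complex_of_real (g x) * exp (- (\<i> * of_real \<theta>))) \<longlongrightarrow> exp (- (\<i> * of_real \<theta>))) F"
    using tendsto_mult[OF g' tendsto_const, of "exp (- (\<i> * of_real \<theta>))"] by simp
  have t1: "((\<lambda>x. (1 - of_real (g x) * exp (\<i> * of_real \<theta>)) powr of_real \<alpha>) \<longlongrightarrow>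
      (1 - exp (\<i> * of_real \<theta>)) powr of_real \<alpha>) F"
    by (rule tendsto_powr_complex') (use base_ok1[of \<theta>] assms(1) in \<open>auto intro!: tendsto_intros ga gb\<close>)
  have t2: "((\<lambda>x. (1 + of_real (g x) * exp (- \<i> * of_real \<theta>)) powr of_real \<alpha>) \<longlongrightarrow>
      (1 + exp (- \<i> * of_real \<theta>)) powr of_real \<alpha>) F"
    by (rule tendsto_powr_complex') (use base_ok2[of \<theta>] assms(1) in \<open>auto intro!: tendsto_intros ga gb\<close>)
  show ?thesis unfolding phi_R_def using tendsto_mult[OF t1 t2] by simp
qed

lemma phi_eq: assumes "\<alpha> > 0" shows "phi \<alpha> \<theta> = phi_R \<alpha> 1 \<theta>"
proof -
  have "((\<lambda>R. phi_R \<alpha> R \<theta>) \<longlongrightarrow> phi_R \<alpha> 1 \<theta>) (at_left 1)"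
    by (rule phi_R_tendsto[OF assms]) (rule tendsto_ident_at)
  then show ?thesis unfolding phi_def by (intro tendsto_Lim) (auto simp: trivial_limit_at_left_real)
qed

definition Rk :: "nat \<Rightarrow> real" where "Rk k = 1 - 1 / (real k + 2)"

lemma Rk_props: "0 \<le> Rk k" "Rk k < 1" "Rk \<longlonglongrightarrow> 1"
proof -
  show "0 \<le> Rk k" "Rk k < 1" unfolding Rk_def by (auto simp: field_simps)
  have "(\<lambda>k. 1 / (real k + 2)) \<longlonglongrightarrow> 0"
    by real_asymp
  from tendsto_diff[OF tendsto_const this, of 1] show "Rk \<longlonglongrightarrow> 1" unfolding Rk_def by simp
qed

lemma phi_R_bound: assumes "0 \<le> R" "R \<le> 1" "\<alpha> \<ge> 0" shows "norm (phi_R \<alpha> R \<theta>) \<le> 2 powr \<alpha> * 2 powr \<alpha>"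
  unfolding phi_R_PQ norm_mult using PP_bound[OF assms] QQ_bound[OF assms] by (intro mult_mono) auto

lemma fc_limit:
  assumes "\<alpha> > 0"
  shows "(\<lambda>k. fourier_coeff (phi_R \<alpha> (Rk k)) s) \<longlonglongrightarrow> fourier_coeff (phi \<alpha>) s"
proof -
  define E where "E = (\<lambda>\<theta>::real. exp (- \<i> * of_int s * of_real \<theta>))"
  have cont: "continuous_on {-pi..pi} (\<lambda>\<theta>. phi_R \<alpha> R \<theta> * E \<theta>)" if "0 \<le> R" "R \<le> 1" for R
    unfolding phi_R_PQ E_def using that assms by (intro continuous_intros PP_cont QQ_cont) auto
  have "(\<lambda>k. integral {-pi..pi} (\<lambda>\<theta>. phi_R \<alpha> (Rk k) \<theta> * E \<theta>)) \<longlonglongrightarrow> integral {-pi..pi} (\<lambda>\<theta>. phi_R \<alpha> 1 \<theta> * E \<theta>)"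
  proof (rule dominated_convergence(2))
    show "(\<lambda>\<theta>. phi_R \<alpha> (Rk k) \<theta> * E \<theta>) integrable_on {-pi..pi}" for k
      using Rk_props(1,2)[of k] by (intro integrable_continuous_real cont) auto
    show "(\<lambda>_. 2 powr \<alpha> * 2 powr \<alpha>) integrable_on {-pi..pi}" by (rule integrable_const_ivl)
    show "norm (phi_R \<alpha> (Rk k) \<theta> * E \<theta>) \<le> 2 powr \<alpha> * 2 powr \<alpha>" for k \<theta>
      unfolding E_def norm_mult using phi_R_bound[where R="Rk k"] Rk_props(1,2)[of k] assms by simp
    show "(\<lambda>k. phi_R \<alpha> (Rk k) \<theta> * E \<theta>) \<longlonglongrightarrow> phi_R \<alpha> 1 \<theta> * E \<theta>" for \<theta>
      by (intro tendsto_mult tendsto_const phi_R_tendsto assms Rk_props)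
  qed
  moreover have "phi \<alpha> = phi_R \<alpha> 1" using phi_eq[OF assms] by (rule ext)
  ultimately show ?thesis unfolding fourier_coeff_def E_def by (intro tendsto_mult tendsto_const) simp
qed



lemma coeff_bounds:
  fixes \<alpha> :: real
  assumes "0 < \<alpha>" "\<alpha> < 1"
  obtains A B where "A \<ge> 0" "B \<ge> 0"
    "\<And>l. l \<ge> 1 \<Longrightarrow> norm (fourier_coeff (phi \<alpha>) (- int l)) \<le> A * real l powr (-1 - \<alpha>)"
    "\<And>l. norm (fourier_coeff (phi \<alpha>) (- int l) + fourier_coeff (phi \<alpha>) (- int (Suc l))) \<le> B * real (Suc l) powr (-2 - \<alpha>)"
proof -
  obtain A B where AB: "A \<ge> 0" "B \<ge> 0"
    "\<And>R l. 0 \<le> R \<Longrightarrow> R \<le> 1 \<Longrightarrow> l \<ge> 1 \<Longrightarrow> \<bar>cc \<alpha> R l\<bar> \<le> A * real l powr (-1 - \<alpha>)"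
    "\<And>R l. 0 \<le> R \<Longrightarrow> R \<le> 1 \<Longrightarrow>
       \<bar>cc \<alpha> R l + cc \<alpha> R (Suc l)\<bar> \<le> B * real (Suc l) powr (-2 - \<alpha>) + (1 - R) * A * real (Suc l) powr (-1 - \<alpha>)"
    using cc_bounds[OF assms] by blast
  have fc: "fourier_coeff (phi_R \<alpha> (Rk k)) (- int l) = of_real (cc \<alpha> (Rk k) l)" for k l
    using Rk_props(1,2)[of k] assms by (intro fc_phi_R) auto
  show ?thesis
  proof (rule that[OF AB(1,2)])
    fix l :: nat assume l: "l \<ge> 1"
    show "norm (fourier_coeff (phi \<alpha>) (- int l)) \<le> A * real l powr (-1 - \<alpha>)"
    proof (rule Lim_norm_ubound[OF _ fc_limit[OF assms(1)]])
      show "\<forall>\<^sub>F k in sequentially. norm (fourier_coeff (phi_R \<alpha> (Rk k)) (- int l)) \<le> A * real l powr (- 1 - \<alpha>)"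
        using AB(3)[OF Rk_props(1) less_imp_le[OF Rk_props(2)] l] by (simp add: fc)
    qed simp
  next
    fix l :: nat
    have t1: "(\<lambda>k. norm (fourier_coeff (phi_R \<alpha> (Rk k)) (- int l) + fourier_coeff (phi_R \<alpha> (Rk k)) (- int (Suc l))))
       \<longlonglongrightarrow> norm (fourier_coeff (phi \<alpha>) (- int l) + fourier_coeff (phi \<alpha>) (- int (Suc l)))"
      by (intro tendsto_norm tendsto_add fc_limit assms)
    have t2: "(\<lambda>k. B * real (Suc l) powr (-2 - \<alpha>) + (1 - Rk k) * A * real (Suc l) powr (-1 - \<alpha>))
       \<longlonglongrightarrow> B * real (Suc l) powr (-2 - \<alpha>) + (1 - 1) * A * real (Suc l) powr (-1 - \<alpha>)"
      by (intro tendsto_intros Rk_props)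
    show "norm (fourier_coeff (phi \<alpha>) (- int l) + fourier_coeff (phi \<alpha>) (- int (Suc l))) \<le> B * real (Suc l) powr (-2 - \<alpha>)"
    proof -
      have "norm (fourier_coeff (phi \<alpha>) (- int l) + fourier_coeff (phi \<alpha>) (- int (Suc l)))
          \<le> B * real (Suc l) powr (-2 - \<alpha>) + (1 - 1) * A * real (Suc l) powr (-1 - \<alpha>)"
      proof (rule tendsto_le[OF _ t2 t1])
        show "\<forall>\<^sub>F k in sequentially. norm (fourier_coeff (phi_R \<alpha> (Rk k)) (- int l) + fourier_coeff (phi_R \<alpha> (Rk k)) (- int (Suc l)))
            \<le> B * real (Suc l) powr (-2 - \<alpha>) + (1 - Rk k) * A * real (Suc l) powr (-1 - \<alpha>)"
        proof (rule always_eventually, rule allI)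
          fix k
          have "norm (fourier_coeff (phi_R \<alpha> (Rk k)) (- int l) + fourier_coeff (phi_R \<alpha> (Rk k)) (- int (Suc l)))
              = \<bar>cc \<alpha> (Rk k) l + cc \<alpha> (Rk k) (Suc l)\<bar>"
            unfolding fc by (simp only: of_real_add[symmetric] norm_of_real)
          also have "\<dots> \<le> B * real (Suc l) powr (-2 - \<alpha>) + (1 - Rk k) * A * real (Suc l) powr (-1 - \<alpha>)"
            using AB(4)[OF Rk_props(1) less_imp_le[OF Rk_props(2)]] by blast
          finally show "norm (fourier_coeff (phi_R \<alpha> (Rk k)) (- int l) + fourier_coeff (phi_R \<alpha> (Rk k)) (- int (Suc l)))
              \<le> B * real (Suc l) powr (-2 - \<alpha>) + (1 - Rk k) * A * real (Suc l) powr (-1 - \<alpha>)" .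
        qed
      qed simp
      then show ?thesis by simp
    qed
  qed
qed



lemma sum_powr_bound:
  fixes \<gamma> :: real assumes "0 \<le> \<gamma>" "\<gamma> < 1"
  shows "(\<Sum>j=1..M. real j powr (-\<gamma>)) \<le> real M powr (1 - \<gamma>) / (1 - \<gamma>)"
proof (induction M)
  case 0 then show ?case by simp
next
  case (Suc M)
  show ?case
  proof (cases "M = 0")
    case True
    then show ?thesis using assms by (simp add: field_simps)
  next
    case False
    then have M1: "real M \<ge> 1" by simp
    have "\<exists>z. real M < z \<and> z < real M + 1 \<and>
      (real M + 1) powr (1 - \<gamma>) - real M powr (1 - \<gamma>) = (real M + 1 - real M) * ((1 - \<gamma>) * z powr (- \<gamma>))"
    proof (rule MVT2)
      fix x :: real assume "real M \<le> x" "x \<le> real M + 1"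
      then have "x > 0" using M1 by simp
      from has_real_derivative_powr[OF this, of "1 - \<gamma>"]
      show "((\<lambda>a. a powr (1 - \<gamma>)) has_real_derivative (1 - \<gamma>) * x powr - \<gamma>) (at x)" by simp
    qed simp
    then obtain z where z: "real M < z" "z < real M + 1"
      "(real M + 1) powr (1 - \<gamma>) - real M powr (1 - \<gamma>) = (1 - \<gamma>) * z powr (- \<gamma>)"
      by auto
    have "(real M + 1) powr (-\<gamma>) \<le> z powr (-\<gamma>)"
      using z M1 assms by (intro powr_mono2') auto
    moreover have "((real M + 1) powr (1 - \<gamma>) - real M powr (1 - \<gamma>)) / (1 - \<gamma>) = z powr (-\<gamma>)"
      unfolding z(3) using assms by simp
    ultimately have step: "(real M + 1) powr (-\<gamma>) \<le> ((real M + 1) powr (1 - \<gamma>) - real M powr (1 - \<gamma>)) / (1 - \<gamma>)"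
      by simp
    have "(\<Sum>j=1..Suc M. real j powr (-\<gamma>)) = (\<Sum>j=1..M. real j powr (-\<gamma>)) + (real M + 1) powr (-\<gamma>)"
      by (simp add: add.commute)
    also have "\<dots> \<le> real M powr (1 - \<gamma>) / (1 - \<gamma>) + ((real M + 1) powr (1 - \<gamma>) - real M powr (1 - \<gamma>)) / (1 - \<gamma>)"
      using Suc.IH step by (rule add_mono)
    also have "\<dots> = real (Suc M) powr (1 - \<gamma>) / (1 - \<gamma>)"
      by (simp add: add_divide_distrib[symmetric] add.commute)
    finally show ?thesis .
  qed
qed


lemma pair_sum:
  fixes c x :: "nat \<Rightarrow> 'a::comm_ring_1"
  shows "2 * (\<Sum>l=0..q. c l * x l) =
    (\<Sum>l<q. (c l + c (Suc l)) * x l + c (Suc l) * (x (Suc l) - x l)) + c 0 * x 0 + c q * x q"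
proof (induction q)
  case 0 then show ?case by (simp add: mult_2[symmetric])
next
  case (Suc q)
  define F where "F = (\<lambda>l. (c l + c (Suc l)) * x l + c (Suc l) * (x (Suc l) - x l))"
  have Fq: "F q + c (Suc q) * x (Suc q) = c q * x q + 2 * (c (Suc q) * x (Suc q))"
    unfolding F_def by (simp add: algebra_simps)
  have "2 * (\<Sum>l=0..Suc q. c l * x l) = 2 * (\<Sum>l=0..q. c l * x l) + 2 * (c (Suc q) * x (Suc q))"
    by (simp add: distrib_left)
  also have "\<dots> = sum F {..<q} + c 0 * x 0 + (c q * x q + 2 * (c (Suc q) * x (Suc q)))"
    using Suc.IH unfolding F_def by (simp only: add.assoc)
  also have "\<dots> = sum F {..<q} + c 0 * x 0 + (F q + c (Suc q) * x (Suc q))" by (simp only: Fq)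
  also have "\<dots> = (sum F {..<q} + F q) + c 0 * x 0 + c (Suc q) * x (Suc q)" by (simp only: add_ac)
  also have "sum F {..<q} + F q = sum F {..<Suc q}" by simp
  finally show ?case unfolding F_def .
qed

lemma sum_reflect:
  fixes h :: "nat \<Rightarrow> real"
  assumes "a \<le> N"
  shows "(\<Sum>l\<in>{a..<N}. h (N - l)) = (\<Sum>j=1..N-a. h j)"
  by (rule sum.reindex_bij_witness[of _ "\<lambda>j. N - j" "\<lambda>l. N - l"]) (use assms in auto)



lemma Z_summable: "\<alpha> > 0 \<Longrightarrow> summable (\<lambda>l. real (Suc l) powr (-1 - \<alpha>))"
  using summable_Suc_iff[of "\<lambda>n. real n powr (-1 - \<alpha>)"] summable_real_powr_iff[of "-1 - \<alpha>"] by simp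

lemma partA:
  fixes c :: "nat \<Rightarrow> complex" and X :: "nat \<Rightarrow> real"
  assumes N: "N \<ge> 1" and AB: "A \<ge> 0" "B \<ge> 0" "L \<ge> 0" and \<alpha>: "0 < \<alpha>"
    and C1: "\<And>l. l \<ge> 1 \<Longrightarrow> norm (c l) \<le> A * real l powr (-1 - \<alpha>)"
    and C2: "\<And>l. norm (c l + c (Suc l)) \<le> B * real (Suc l) powr (-2 - \<alpha>)"
    and X0: "X 0 = 0"
    and Xb: "\<And>l. l \<le> q \<Longrightarrow> \<bar>X l\<bar> \<le> L * real l / real N"
    and Xd: "\<And>l. l < q \<Longrightarrow> \<bar>X (Suc l) - X l\<bar> \<le> L / real N"
  shows "norm (\<Sum>l=0..q. c l * of_real (X l)) \<le> ((A + B) * L * (\<Sum>l. real (Suc l) powr (-1 - \<alpha>)) + A * L) / real N"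
proof -
  define Z where "Z = (\<Sum>l. real (Suc l) powr (-1 - \<alpha>))"
  define x where "x = (\<lambda>l. complex_of_real (X l))"
  define F where "F = (\<lambda>l. (c l + c (Suc l)) * x l + c (Suc l) * (x (Suc l) - x l))"
  have Np: "real N > 0" using N by simp
  have eq: "2 * (\<Sum>l=0..q. c l * x l) = sum F {..<q} + c 0 * x 0 + c q * x q"
    unfolding F_def by (rule pair_sum)
  have Fb: "norm (F l) \<le> (A + B) * L * real (Suc l) powr (-1 - \<alpha>) / real N" if l: "l < q" for l
  proof -
    have p1: "real l * real (Suc l) powr (-2 - \<alpha>) \<le> real (Suc l) powr (-1 - \<alpha>)"
    proof -
      have "real l * real (Suc l) powr (-2 - \<alpha>) \<le> real (Suc l) * real (Suc l) powr (-2 - \<alpha>)"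
        by (intro mult_right_mono) auto
      also have "\<dots> = real (Suc l) powr (-1 - \<alpha>)"
        by (subst powr_mult_base) auto
      finally show ?thesis .
    qed
    have "norm (F l) \<le> norm (c l + c (Suc l)) * \<bar>X l\<bar> + norm (c (Suc l)) * \<bar>X (Suc l) - X l\<bar>"
      unfolding F_def x_def
      by (rule order_trans[OF norm_triangle_ineq]) (simp add: norm_mult of_real_diff[symmetric] del: of_real_diff)
    also have "\<dots> \<le> (B * real (Suc l) powr (-2 - \<alpha>)) * (L * real l / real N) + (A * real (Suc l) powr (-1 - \<alpha>)) * (L / real N)"
      using C2[of l] C1[of "Suc l"] Xb[of l] Xd[OF l] l AB
      by (intro add_mono mult_mono) auto
    also have "\<dots> = (B * L * (real l * real (Suc l) powr (-2 - \<alpha>)) + A * L * real (Suc l) powr (-1 - \<alpha>)) / real N"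
      by (simp add: add_divide_distrib algebra_simps)
    also have "\<dots> \<le> (B * L * real (Suc l) powr (-1 - \<alpha>) + A * L * real (Suc l) powr (-1 - \<alpha>)) / real N"
      using p1 AB Np by (intro divide_right_mono add_mono mult_left_mono) auto
    also have "\<dots> = (A + B) * L * real (Suc l) powr (-1 - \<alpha>) / real N"
      by (simp add: field_simps)
    finally show ?thesis .
  qed
  have sumF: "norm (sum F {..<q}) \<le> (A + B) * L * Z / real N"
  proof -
    have "norm (sum F {..<q}) \<le> (\<Sum>l<q. (A + B) * L * real (Suc l) powr (-1 - \<alpha>) / real N)"
      by (rule order_trans[OF norm_sum sum_mono]) (use Fb in auto)
    also have "\<dots> = (A + B) * L / real N * (\<Sum>l<q. real (Suc l) powr (-1 - \<alpha>))"
      by (simp add: sum_distrib_left field_simps)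
    also have "\<dots> \<le> (A + B) * L / real N * Z"
      unfolding Z_def using AB Np
      by (intro mult_left_mono sum_le_suminf Z_summable \<alpha>) auto
    finally show ?thesis by simp
  qed
  have cq: "norm (c q * x q) \<le> A * L / real N"
  proof (cases "q = 0")
    case True then show ?thesis using X0 AB Np unfolding x_def by simp
  next
    case False
    then have q1: "q \<ge> 1" by simp
    have "norm (c q * x q) = norm (c q) * \<bar>X q\<bar>" unfolding x_def by (simp add: norm_mult)
    also have "\<dots> \<le> (A * real q powr (-1 - \<alpha>)) * (L * real q / real N)"
      using C1[OF q1] Xb[of q] AB by (intro mult_mono) auto
    also have "\<dots> = A * L * (real q * real q powr (-1 - \<alpha>)) / real N" by (simp add: field_simps)
    also have "real q * real q powr (-1 - \<alpha>) = real q powr (- \<alpha>)"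
      by (subst powr_mult_base) auto
    also have "real q powr (- \<alpha>) \<le> 1" using q1 \<alpha> powr_antimono_nat[of "-\<alpha>" 1 q] by simp
    then have "A * L * real q powr (- \<alpha>) / real N \<le> A * L * 1 / real N"
      using AB Np by (intro divide_right_mono mult_left_mono) auto
    finally show ?thesis by simp
  qed
  have "2 * norm (\<Sum>l=0..q. c l * x l) = norm (2 * (\<Sum>l=0..q. c l * x l))" by (simp add: norm_mult)
  also have "\<dots> \<le> norm (sum F {..<q}) + norm (c 0 * x 0) + norm (c q * x q)"
    unfolding eq by (rule order_trans[OF norm_triangle_ineq add_right_mono[OF norm_triangle_ineq]])
  also have "\<dots> \<le> (A + B) * L * Z / real N + 0 + A * L / real N"
    using sumF cq X0 unfolding x_def by (intro add_mono) auto
  finally have "2 * norm (\<Sum>l=0..q. c l * x l) \<le> ((A + B) * L * Z + A * L) / real N"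
    by (simp add: add_divide_distrib)
  moreover have "0 \<le> ((A + B) * L * Z + A * L) / real N"
  proof -
    have "Z \<ge> 0" unfolding Z_def by (intro suminf_nonneg Z_summable \<alpha>) auto
    then show ?thesis using AB Np by (intro divide_nonneg_pos add_nonneg_nonneg mult_nonneg_nonneg) auto
  qed
  ultimately show ?thesis unfolding x_def Z_def by linarith
qed



lemma partB:
  fixes c :: "nat \<Rightarrow> complex" and X :: "nat \<Rightarrow> real"
  assumes N: "N \<ge> 1" and A: "A \<ge> 0" and K1: "K1 \<ge> 0" and \<gamma>: "0 \<le> \<gamma>" "\<gamma> < 1" and \<alpha>: "0 < \<alpha>"
    and \<delta>: "0 < \<delta>" "\<delta> \<le> 1/2"
    and C1: "\<And>l. l \<ge> 1 \<Longrightarrow> norm (c l) \<le> A * real l powr (-1 - \<alpha>)"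
    and q: "q < N" "real N * (1 - \<delta>) < real (Suc q)"
    and XN0: "X N = 0"
    and Xb: "\<And>l. q < l \<Longrightarrow> l < N \<Longrightarrow> \<bar>X l\<bar> \<le> K1 * (real (N - l) / real N) powr (-\<gamma>)"
  shows "real N powr \<alpha> * norm (\<Sum>l = Suc q..N. c l * of_real (X l)) \<le> A * 2 powr (1 + \<alpha>) * K1 * \<delta> powr (1 - \<gamma>) / (1 - \<gamma>)"
proof -
  have Np: "real N > 0" using N by simp
  define M where "M = N - Suc q"
  have Mle: "real M \<le> \<delta> * real N" unfolding M_def using q by (simp add: of_nat_diff algebra_simps)
  have split: "(\<Sum>l = Suc q..N. c l * of_real (X l)) = (\<Sum>l \<in> {Suc q..<N}. c l * of_real (X l))"
  proof -
    have "{Suc q..N} = insert N {Suc q..<N}" using q by auto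
    then show ?thesis using XN0 by simp
  qed
  have tb: "norm (c l * of_real (X l)) \<le> A * K1 * (2 powr (1 + \<alpha>) * real N powr (-1 - \<alpha>)) * real N powr \<gamma> * real (N - l) powr (-\<gamma>)"
    if l: "l \<in> {Suc q..<N}" for l
  proof -
    have l1: "l \<ge> 1" "q < l" "l < N" using l by auto
    have half: "real N / 2 \<le> real l"
    proof -
      have "real l \<ge> real q + 1" using l1 by simp
      moreover have "\<delta> * real N \<le> (1/2) * real N" using \<delta> Np by (intro mult_right_mono) auto
      ultimately show ?thesis using q(2) by (simp add: algebra_simps)
    qed
    have "real l powr (-1 - \<alpha>) \<le> (real N / 2) powr (-1 - \<alpha>)"
      using half Np \<alpha> by (intro powr_mono2') auto
    also have "(real N / 2) powr (-1 - \<alpha>) = 2 powr (1 + \<alpha>) * real N powr (-1 - \<alpha>)"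
      using Np by (simp add: powr_divide powr_minus_divide divide_simps powr_minus) (simp add: powr_add[symmetric])
    finally have p1: "real l powr (-1 - \<alpha>) \<le> 2 powr (1 + \<alpha>) * real N powr (-1 - \<alpha>)" .
    have p2: "(real (N - l) / real N) powr (-\<gamma>) = real N powr \<gamma> * real (N - l) powr (-\<gamma>)"
      using Np by (simp add: powr_divide powr_minus divide_simps)
    have "norm (c l * of_real (X l)) = norm (c l) * \<bar>X l\<bar>" by (simp add: norm_mult)
    also have "\<dots> \<le> (A * real l powr (-1 - \<alpha>)) * (K1 * (real (N - l) / real N) powr (-\<gamma>))"
      using C1[OF l1(1)] Xb[OF l1(2,3)] A by (intro mult_mono) auto
    also have "\<dots> \<le> (A * (2 powr (1 + \<alpha>) * real N powr (-1 - \<alpha>))) * (K1 * (real (N - l) / real N) powr (-\<gamma>))"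
      using p1 A K1 by (intro mult_right_mono mult_left_mono) auto
    also have "\<dots> = A * K1 * (2 powr (1 + \<alpha>) * real N powr (-1 - \<alpha>)) * real N powr \<gamma> * real (N - l) powr (-\<gamma>)"
      unfolding p2 by (simp add: algebra_simps)
    finally show ?thesis .
  qed
  have "norm (\<Sum>l = Suc q..N. c l * of_real (X l)) \<le>
      (\<Sum>l \<in> {Suc q..<N}. A * K1 * (2 powr (1 + \<alpha>) * real N powr (-1 - \<alpha>)) * real N powr \<gamma> * real (N - l) powr (-\<gamma>))"
    unfolding split by (rule order_trans[OF norm_sum sum_mono]) (use tb in auto)
  also have "\<dots> = A * K1 * (2 powr (1 + \<alpha>) * real N powr (-1 - \<alpha>)) * real N powr \<gamma> * (\<Sum>l \<in> {Suc q..<N}. real (N - l) powr (-\<gamma>))"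
    by (simp add: sum_distrib_left)
  also have "(\<Sum>l \<in> {Suc q..<N}. real (N - l) powr (-\<gamma>)) = (\<Sum>j = 1..M. real j powr (-\<gamma>))"
    unfolding M_def using q by (intro sum_reflect[of "Suc q" N "\<lambda>j. real j powr (-\<gamma>)"]) auto
  also have "\<dots> \<le> real M powr (1 - \<gamma>) / (1 - \<gamma>)" by (rule sum_powr_bound[OF \<gamma>])
  also have "\<dots> \<le> (\<delta> * real N) powr (1 - \<gamma>) / (1 - \<gamma>)"
    using Mle \<gamma> by (intro divide_right_mono powr_mono2) auto
  also have "(\<delta> * real N) powr (1 - \<gamma>) = \<delta> powr (1 - \<gamma>) * real N powr (1 - \<gamma>)"
    using \<delta> Np by (simp add: powr_mult)
  finally have "norm (\<Sum>l = Suc q..N. c l * of_real (X l)) \<le>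
      A * K1 * (2 powr (1 + \<alpha>) * real N powr (-1 - \<alpha>)) * real N powr \<gamma> * (\<delta> powr (1 - \<gamma>) * real N powr (1 - \<gamma>) / (1 - \<gamma>))"
    using A K1 by (simp add: mult_left_mono)
  then have "real N powr \<alpha> * norm (\<Sum>l = Suc q..N. c l * of_real (X l)) \<le>
      real N powr \<alpha> * (A * K1 * (2 powr (1 + \<alpha>) * real N powr (-1 - \<alpha>)) * real N powr \<gamma> * (\<delta> powr (1 - \<gamma>) * real N powr (1 - \<gamma>) / (1 - \<gamma>)))"
    by (rule mult_left_mono) simp
  also have "\<dots> = A * 2 powr (1 + \<alpha>) * K1 * \<delta> powr (1 - \<gamma>) / (1 - \<gamma>) * (real N powr \<alpha> * real N powr (-1 - \<alpha>) * real N powr \<gamma> * real N powr (1 - \<gamma>))"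
    by (simp add: field_simps)
  also have "real N powr \<alpha> * real N powr (-1 - \<alpha>) * real N powr \<gamma> * real N powr (1 - \<gamma>) = 1"
    using Np by (simp add: powr_add[symmetric])
  finally show ?thesis by simp
qed



lemma main_limit:
  fixes \<alpha> :: real and f :: "real \<Rightarrow> real"
  assumes "0 < \<alpha>" "\<alpha> < 1"
    and LW: "L1_weight (1 - \<alpha>) f"
    and LC: "locally_contracting f"
    and f0: "f 0 = 0"
  shows "alpha_seq \<alpha> f 0 \<longlonglongrightarrow> 0"
proof -
  define c where "c = (\<lambda>l::nat. fourier_coeff (phi \<alpha>) (- int l))"
  obtain A B where AB: "A \<ge> 0" "B \<ge> 0"
    and C1: "\<And>l. l \<ge> 1 \<Longrightarrow> norm (c l) \<le> A * real l powr (-1 - \<alpha>)"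
    and C2: "\<And>l. norm (c l + c (Suc l)) \<le> B * real (Suc l) powr (-2 - \<alpha>)"
    using coeff_bounds[OF assms(1,2)] unfolding c_def by metis
  have seq: "alpha_seq \<alpha> f 0 N = of_real (real N powr \<alpha>) * (\<Sum>l=0..N. c l * of_real (XN f N l))" for N
    unfolding alpha_seq_def toeplitz_entry_def c_def by simp
  obtain \<gamma> where \<gamma>: "\<gamma> \<in> {0..1 - \<alpha>}" and O: "(\<lambda>x. f (1 - x)) \<in> O[at_right 0](\<lambda>x. x powr (-\<gamma>))"
    using LW unfolding L1_weight_def by blast
  have \<gamma>1: "0 \<le> \<gamma>" "\<gamma> < 1" using \<gamma> assms by auto
  obtain K1 where K1: "K1 > 0" and evK: "eventually (\<lambda>x. norm (f (1 - x)) \<le> K1 * norm (x powr (-\<gamma>))) (at_right 0)"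
    using O by (elim landau_o.bigE) blast
  obtain \<delta>0 where \<delta>0: "\<delta>0 > 0" and K1b: "\<And>y. 0 < y \<Longrightarrow> y < \<delta>0 \<Longrightarrow> norm (f (1 - y)) \<le> K1 * norm (y powr (-\<gamma>))"
    using evK eventually_at_right[of "0::real" 1] by auto
  define D where "D = A * 2 powr (1 + \<alpha>) * K1 / (1 - \<gamma>)"
  show ?thesis
  proof (rule LIMSEQ_I)
    fix \<epsilon> :: real assume \<epsilon>: "\<epsilon> > 0"
    have "((\<lambda>d. D * d powr (1 - \<gamma>)) \<longlongrightarrow> D * 0) (at_right 0)"
      by (intro tendsto_mult tendsto_const tendsto_zero_powrI tendsto_ident_at)
         (use \<gamma>1 eventually_at_right_less[of "0::real"] in \<open>auto elim: eventually_mono\<close>)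
    then have ev1: "eventually (\<lambda>d. D * d powr (1 - \<gamma>) < \<epsilon> / 2) (at_right 0)"
      using \<epsilon> by (intro order_tendstoD(2)) auto
    have ev2: "eventually (\<lambda>d. d \<in> {0<..<min \<delta>0 (1/2)}) (at_right (0::real))"
      using \<delta>0 by (intro eventually_at_right_real) auto
    obtain \<delta> where \<delta>: "D * \<delta> powr (1 - \<gamma>) < \<epsilon> / 2" "\<delta> \<in> {0<..<min \<delta>0 (1/2)}"
      using eventually_happens[OF eventually_conj[OF ev1 ev2]] by (auto simp: trivial_limit_at_right_real)
    have \<delta>p: "0 < \<delta>" "\<delta> < \<delta>0" "\<delta> \<le> 1/2" using \<delta>(2) by auto
    obtain L where L: "L-lipschitz_on {0..1 - \<delta>} f"
    proof -
      have "{0..1 - \<delta>} \<subseteq> {0..<1}" using \<delta>p by auto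
      then show ?thesis using LC that unfolding locally_contracting_def by blast
    qed
    have L0: "L \<ge> 0" using L by (rule lipschitz_on_nonneg)
    define Z where "Z = (\<Sum>l. real (Suc l) powr (-1 - \<alpha>))"
    define CA where "CA = (A + B) * L * Z + A * L"
    have "(\<lambda>N. CA * real N powr (\<alpha> - 1)) \<longlonglongrightarrow> CA * 0"
      by (intro tendsto_mult tendsto_const tendsto_neg_powr filterlim_real_sequentially) (use assms in auto)
    then have "eventually (\<lambda>N. CA * real N powr (\<alpha> - 1) < \<epsilon> / 2) sequentially"
      using \<epsilon> by (intro order_tendstoD(2)) auto
    then obtain N0 where N0: "\<And>N. N \<ge> N0 \<Longrightarrow> CA * real N powr (\<alpha> - 1) < \<epsilon> / 2"
      unfolding eventually_sequentially by blast
    show "\<exists>no. \<forall>n\<ge>no. norm (alpha_seq \<alpha> f 0 n - 0) < \<epsilon>"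
    proof (intro exI allI impI)
      fix N assume NN: "N \<ge> max 1 N0"
      then have N: "N \<ge> 1" "N \<ge> N0" by auto
      have Np: "real N > 0" using N by simp
      define q where "q = nat \<lfloor>real N * (1 - \<delta>)\<rfloor>"
      have fl0: "0 \<le> real N * (1 - \<delta>)" using \<delta>p by simp
      have q1: "real q \<le> real N * (1 - \<delta>)" unfolding q_def using fl0 by linarith
      have q2: "real N * (1 - \<delta>) < real (Suc q)" unfolding q_def using fl0 by linarith
      have q3: "q < N"
      proof -
        have "real N * (1 - \<delta>) < real N" using Np \<delta>p by (simp add: algebra_simps)
        then show ?thesis using q1 by linarith
      qed
      define X where "X = XN f N"
      have Xl: "X l = f (real l / real N)" if "l < N" for l
        unfolding X_def XN_def using that by simp
      have inD: "real l / real N \<in> {0..1 - \<delta>}" if "l \<le> q" for l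
      proof -
        have "real l \<le> real N * (1 - \<delta>)" using that q1 by linarith
        then show ?thesis using Np by (simp add: field_simps)
      qed
      have sA: "norm (\<Sum>l=0..q. c l * of_real (X l)) \<le> ((A + B) * L * Z + A * L) / real N"
        unfolding Z_def
      proof (rule partA[OF N(1) AB L0 assms(1) C1 C2])
        show "X 0 = 0" using Xl[of 0] N f0 by simp
        show "\<bar>X l\<bar> \<le> L * real l / real N" if "l \<le> q" for l
        proof -
          have "dist (f (real l / real N)) (f 0) \<le> L * dist (real l / real N) 0"
            using L inD[OF that] by (rule lipschitz_onD) (use \<delta>p in auto)
          then show ?thesis using Xl[of l] that q3 f0 Np by (simp add: dist_real_def)
        qed
        show "\<bar>X (Suc l) - X l\<bar> \<le> L / real N" if "l < q" for l
        proof -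
          have "dist (f (real (Suc l) / real N)) (f (real l / real N)) \<le> L * dist (real (Suc l) / real N) (real l / real N)"
            using L inD[of "Suc l"] inD[of l] that by (intro lipschitz_onD) auto
          moreover have "dist (real (Suc l) / real N) (real l / real N) = 1 / real N"
            using Np by (simp add: dist_real_def diff_divide_distrib[symmetric])
          ultimately show ?thesis using Xl[of l] Xl[of "Suc l"] that q3 by (simp add: dist_real_def)
        qed
      qed
      have sB: "real N powr \<alpha> * norm (\<Sum>l = Suc q..N. c l * of_real (X l)) \<le> A * 2 powr (1 + \<alpha>) * K1 * \<delta> powr (1 - \<gamma>) / (1 - \<gamma>)"
      proof (rule partB[OF N(1) AB(1) less_imp_le[OF K1] \<gamma>1 assms(1) \<delta>p(1,3) C1 q3 q2])
        show "X N = 0" unfolding X_def XN_def by simp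
        show "\<bar>X l\<bar> \<le> K1 * (real (N - l) / real N) powr - \<gamma>" if "q < l" "l < N" for l
        proof -
          define y where "y = real (N - l) / real N"
          have y1: "real l / real N = 1 - y" unfolding y_def using that Np by (simp add: of_nat_diff field_simps)
          have y2: "0 < y" unfolding y_def using that Np by simp
          have "real (N - l) < \<delta> * real N"
          proof -
            have "real l \<ge> real (Suc q)" using that by simp
            then show ?thesis using that q2 by (simp add: of_nat_diff algebra_simps)
          qed
          moreover have "\<delta> * real N < \<delta>0 * real N" using \<delta>p Np by (intro mult_strict_right_mono) auto
          ultimately have "real (N - l) < \<delta>0 * real N" by linarith
          then have y3: "y < \<delta>0" unfolding y_def using Np by (simp add: pos_divide_less_eq)
          have "norm (f (1 - y)) \<le> K1 * norm (y powr (-\<gamma>))" by (rule K1b[OF y2 y3])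
          then show ?thesis using Xl[OF that(2)] y1 y2 unfolding y_def[symmetric] by simp
        qed
      qed
      have split: "(\<Sum>l=0..N. c l * of_real (X l)) = (\<Sum>l=0..q. c l * of_real (X l)) + (\<Sum>l = Suc q..N. c l * of_real (X l))"
      proof -
        have "{0..N} = {0..q} \<union> {Suc q..N}" using q3 by auto
        then show ?thesis by (simp add: sum.union_disjoint)
      qed
      have "norm (alpha_seq \<alpha> f 0 N - 0) = real N powr \<alpha> * norm (\<Sum>l=0..N. c l * of_real (X l))"
        unfolding seq X_def by (simp add: norm_mult)
      also have "\<dots> \<le> real N powr \<alpha> * norm (\<Sum>l=0..q. c l * of_real (X l)) + real N powr \<alpha> * norm (\<Sum>l = Suc q..N. c l * of_real (X l))"
        unfolding split distrib_left[symmetric] by (intro mult_left_mono norm_triangle_ineq) auto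
      also have "\<dots> \<le> real N powr \<alpha> * (CA / real N) + D * \<delta> powr (1 - \<gamma>)"
      proof (rule add_mono)
        show "real N powr \<alpha> * norm (\<Sum>l=0..q. c l * of_real (X l)) \<le> real N powr \<alpha> * (CA / real N)"
          using sA unfolding CA_def by (intro mult_left_mono) auto
        have e: "A * 2 powr (1 + \<alpha>) * K1 * \<delta> powr (1 - \<gamma>) / (1 - \<gamma>) = D * \<delta> powr (1 - \<gamma>)"
          unfolding D_def by simp
        show "real N powr \<alpha> * norm (\<Sum>l = Suc q..N. c l * of_real (X l)) \<le> D * \<delta> powr (1 - \<gamma>)"
          using sB unfolding e .
      qed
      also have "real N powr \<alpha> * (CA / real N) = CA * real N powr (\<alpha> - 1)"
        using Np by (simp add: powr_diff field_simps)
      also have "CA * real N powr (\<alpha> - 1) + D * \<delta> powr (1 - \<gamma>) < \<epsilon> / 2 + \<epsilon> / 2"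
        using N0[OF N(2)] \<delta>(1) by (rule add_strict_mono)
      finally show "norm (alpha_seq \<alpha> f 0 N - 0) < \<epsilon>" by simp
    qed
  qed
qed

theorem mainTheorem3:
  fixes \<alpha> :: real and f :: "real \<Rightarrow> real"
  assumes "0 < \<alpha>" "\<alpha> < 1"
    and "L1_weight (1 - \<alpha>) f"
    and "locally_contracting f"
    and "f 0 = 0"
  shows "alpha_derivable \<alpha> f 0 \<and> D_alpha \<alpha> f 0 = 0"
proof -
  have l: "alpha_seq \<alpha> f 0 \<longlonglongrightarrow> 0" by (rule main_limit[OF assms])
  then have "alpha_derivable \<alpha> f 0" unfolding alpha_derivable_def by blast
  moreover have "D_alpha \<alpha> f 0 = 0" unfolding D_alpha_def using l by (rule limI)
  ultimately show ?thesis by blast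
qed

end
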